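(* Let $L=\{0,1,\dots,m\}^n$ ordered componentwise with bottom $\bot=(0,\dots,0)$, and let $f_1,\dots,f_n:L\to L$ be monotone, inflationary, and such that each $f_i$ is $i$-local. Fix integers $T\ge 0$ and $\tau\ge 1$. Consider an execution $G_0=\bot,G_1,G_2,\dots$ in which at each round $t$ a scheduler chooses $S_t\subseteq\{1,\dots,n\}$, and for each $i\in S_t$ process $i$ uses a view $\widehat G^{(i)}_t\in L$ satisfying bounded staleness with parameter $T$; the next state is given coordinatewise by $G_{t+1}[i]=f_i(\widehat G^{(i)}_t)[i]$ for $i\in S_t$ and $G_{t+1}[j]=G_t[j]$ for $j\notin S_t$. Assume the scheduler is strongly fair with parameter $\tau$. Then there exists $U$ with $G_t=G^*$ for all $t\ge U$, and $G^*$ is the least common fixed point of $\{f_1,\dots,f_n\}$.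
   Context: A function $f_i:L\to L$ is $i$-local if $f_i(G)[j]=G[j]$ for all $G\in L$ and all $j\neq i$. Bounded staleness with parameter $T$: for every round $t$ and $i\in S_t$, $\widehat G^{(i)}_t[i]=G_t[i]$, and for each $j\neq i$, $\widehat G^{(i)}_t[j]=G_s[j]$ for some round $s$ with $\max(0,t-T)\le s\le t$. Strong fairness with parameter $\tau$: every index $i$ belongs to $S_t$ for at least one $t$ in every window of $\tau$ consecutive rounds. A function is inflationary if $f(G)\ge G$ for all $G$, monotone if $G\le H\Rightarrow f(G)\le f(H)$. The least common fixed point is the least $G\in L$ with $f_i(G)=G$ for all $i$. *)

theory Defs
  imports Main
begin

text \<open>States: the lattice L = {0..m}^n, represented as functions nat => nat
  indexed by 1..n, with value 0 outside the index range {1..n}.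
  The order is the componentwise (pointwise) order on functions.\<close>

definition Lat :: "nat \<Rightarrow> nat \<Rightarrow> (nat \<Rightarrow> nat) set" where
  "Lat m n = {G. (\<forall>i\<in>{1..n}. G i \<le> m) \<and> (\<forall>i. i \<notin> {1..n} \<longrightarrow> G i = 0)}"

definition bottom :: "nat \<Rightarrow> nat" where
  "bottom = (\<lambda>_. 0)"

definition maps_into :: "nat \<Rightarrow> nat \<Rightarrow> ((nat \<Rightarrow> nat) \<Rightarrow> (nat \<Rightarrow> nat)) \<Rightarrow> bool" where
  "maps_into m n g \<longleftrightarrow> (\<forall>G\<in>Lat m n. g G \<in> Lat m n)"

definition monotone_L :: "nat \<Rightarrow> nat \<Rightarrow> ((nat \<Rightarrow> nat) \<Rightarrow> (nat \<Rightarrow> nat)) \<Rightarrow> bool" where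
  "monotone_L m n g \<longleftrightarrow> (\<forall>G\<in>Lat m n. \<forall>H\<in>Lat m n. G \<le> H \<longrightarrow> g G \<le> g H)"

definition inflationary_L :: "nat \<Rightarrow> nat \<Rightarrow> ((nat \<Rightarrow> nat) \<Rightarrow> (nat \<Rightarrow> nat)) \<Rightarrow> bool" where
  "inflationary_L m n g \<longleftrightarrow> (\<forall>G\<in>Lat m n. G \<le> g G)"

definition local_L :: "nat \<Rightarrow> nat \<Rightarrow> nat \<Rightarrow> ((nat \<Rightarrow> nat) \<Rightarrow> (nat \<Rightarrow> nat)) \<Rightarrow> bool" where
  "local_L m n i g \<longleftrightarrow> (\<forall>G\<in>Lat m n. \<forall>j\<in>{1..n}. j \<noteq> i \<longrightarrow> g G j = G j)"

definition least_common_fp ::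
  "nat \<Rightarrow> nat \<Rightarrow> (nat \<Rightarrow> (nat \<Rightarrow> nat) \<Rightarrow> (nat \<Rightarrow> nat)) \<Rightarrow> (nat \<Rightarrow> nat) \<Rightarrow> bool" where
  "least_common_fp m n f G \<longleftrightarrow>
     G \<in> Lat m n \<and> (\<forall>i\<in>{1..n}. f i G = G) \<and>
     (\<forall>H\<in>Lat m n. (\<forall>i\<in>{1..n}. f i H = H) \<longrightarrow> G \<le> H)"

text \<open>Bounded staleness with parameter T: V t i is the view of process i at round t.\<close>
definition bounded_staleness ::
  "nat \<Rightarrow> nat \<Rightarrow> nat \<Rightarrow> (nat \<Rightarrow> nat set) \<Rightarrow> (nat \<Rightarrow> nat \<Rightarrow> nat \<Rightarrow> nat)
     \<Rightarrow> (nat \<Rightarrow> nat \<Rightarrow> nat) \<Rightarrow> bool" where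
  "bounded_staleness m n T S V G \<longleftrightarrow>
     (\<forall>t. \<forall>i\<in>S t. V t i \<in> Lat m n \<and> V t i i = G t i \<and>
        (\<forall>j\<in>{1..n}. j \<noteq> i \<longrightarrow> (\<exists>s. max 0 (int t - int T) \<le> int s \<and> s \<le> t \<and> V t i j = G s j)))"

definition strongly_fair :: "nat \<Rightarrow> nat \<Rightarrow> (nat \<Rightarrow> nat set) \<Rightarrow> bool" where
  "strongly_fair n \<tau> S \<longleftrightarrow> (\<forall>i\<in>{1..n}. \<forall>t0. \<exists>t. t0 \<le> t \<and> t < t0 + \<tau> \<and> i \<in> S t)"

end

theory Submission
  imports Defs
begin

theorem theorem4:
  fixes m n T \<tau> :: nat
    and f :: "nat \<Rightarrow> (nat \<Rightarrow> nat) \<Rightarrow> (nat \<Rightarrow> nat)"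
    and S :: "nat \<Rightarrow> nat set"
    and V :: "nat \<Rightarrow> nat \<Rightarrow> nat \<Rightarrow> nat"
    and G :: "nat \<Rightarrow> nat \<Rightarrow> nat"
  assumes f_into: "\<forall>i\<in>{1..n}. maps_into m n (f i)"
    and f_mono: "\<forall>i\<in>{1..n}. monotone_L m n (f i)"
    and f_infl: "\<forall>i\<in>{1..n}. inflationary_L m n (f i)"
    and f_local: "\<forall>i\<in>{1..n}. local_L m n i (f i)"
    and tau_pos: "\<tau> \<ge> 1"
    and G0: "G 0 = bottom"
    and S_sub: "\<forall>t. S t \<subseteq> {1..n}"
    and stale: "bounded_staleness m n T S V G"
    and step: "\<forall>t j. G (Suc t) j = (if j \<in> S t then f j (V t j) j else G t j)"
    and fair: "strongly_fair n \<tau> S"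
  shows "\<exists>Gstar U. (\<forall>t\<ge>U. G t = Gstar) \<and> least_common_fp m n f Gstar"
proof -
  have VL: "V t i \<in> Lat m n" and Vi: "V t i i = G t i"
    and Vj: "\<And>j. j \<in> {1..n} \<Longrightarrow> j \<noteq> i \<Longrightarrow> \<exists>s. max 0 (int t - int T) \<le> int s \<and> s \<le> t \<and> V t i j = G s j"
    if "i \<in> S t" for t i
    using stale that unfolding bounded_staleness_def by blast+
  have GL: "G t \<in> Lat m n" for t
  proof (induction t)
    case 0 then show ?case using G0 by (simp add: Lat_def bottom_def)
  next
    case (Suc t)
    show ?case unfolding Lat_def
    proof (intro CollectI conjI ballI allI impI)
      fix i assume i: "i \<in> {1..n}"
      show "G (Suc t) i \<le> m"
      proof (cases "i \<in> S t")
        case True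
        then have "f i (V t i) \<in> Lat m n" using f_into i VL unfolding maps_into_def by blast
        then show ?thesis using step True i unfolding Lat_def by auto
      next
        case False then show ?thesis using step Suc i unfolding Lat_def by auto
      qed
    next
      fix i assume i: "i \<notin> {1..n}"
      then have "i \<notin> S t" using S_sub by blast
      then show "G (Suc t) i = 0" using step Suc i unfolding Lat_def by auto
    qed
  qed
  have Gsuc: "G t \<le> G (Suc t)" for t
  proof (rule le_funI)
    fix j show "G t j \<le> G (Suc t) j"
    proof (cases "j \<in> S t")
      case True
      then have j: "j \<in> {1..n}" using S_sub by blast
      have "V t j \<le> f j (V t j)" using f_infl j VL[OF True] unfolding inflationary_L_def by blast
      then have "V t j j \<le> f j (V t j) j" by (simp add: le_fun_def)
      then show ?thesis using step True Vi[OF True] by simp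
    next
      case False then show ?thesis using step by simp
    qed
  qed
  have Gmono: "G s \<le> G t" if "s \<le> t" for s t
    using that
  proof (induction t)
    case 0 then show ?case by simp
  next
    case (Suc t)
    show ?case
    proof (cases "s = Suc t")
      case False
      then have "G s \<le> G t" using Suc by simp
      then show ?thesis using Gsuc[of t] by (rule order.trans)
    qed simp
  qed
  have Vle: "V t i \<le> G t" if iS: "i \<in> S t" for t i
  proof (rule le_funI)
    fix j show "V t i j \<le> G t j"
    proof (cases "j \<in> {1..n}")
      case True
      show ?thesis
      proof (cases "j = i")
        case True then show ?thesis using Vi[OF iS] by simp
      next
        case False
        from Vj[OF iS \<open>j \<in> {1..n}\<close> False] obtain s where "s \<le> t" "V t i j = G s j" by blast
        then show ?thesis using Gmono[of s t] by (simp add: le_fun_def)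
      qed
    next
      case False then show ?thesis using VL[OF iS] unfolding Lat_def by simp
    qed
  qed
  have Gbound: "G t \<le> H" if H: "H \<in> Lat m n" "\<forall>i\<in>{1..n}. f i H = H" for H t
  proof (induction t)
    case 0 then show ?case using G0 by (simp add: bottom_def le_fun_def)
  next
    case (Suc t)
    show ?case
    proof (rule le_funI)
      fix j show "G (Suc t) j \<le> H j"
      proof (cases "j \<in> S t")
        case True
        then have j: "j \<in> {1..n}" using S_sub by blast
        have "V t j \<le> H" using Vle[OF True] Suc by (rule order.trans)
        then have "f j (V t j) \<le> f j H" using f_mono j VL[OF True] H(1) unfolding monotone_L_def by blast
        then have "f j (V t j) j \<le> H j" using H(2) j by (metis le_funD)
        then show ?thesis using step True by simp
      next
        case False then show ?thesis using step Suc by (simp add: le_fun_def)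
      qed
    qed
  qed
  define \<phi> where "\<phi> t = (\<Sum>j\<in>{1..n}. G t j)" for t
  have phib: "\<phi> t \<le> n * m" for t
  proof -
    have "\<phi> t \<le> (\<Sum>j\<in>{1..n}. m)" unfolding \<phi>_def
      using GL[of t] by (intro sum_mono) (simp add: Lat_def)
    then show ?thesis by simp
  qed
  have fin: "finite (range \<phi>)"
  proof (rule finite_subset)
    show "range \<phi> \<subseteq> {..n * m}" using phib by auto
  qed simp
  define M where "M = Max (range \<phi>)"
  have "M \<in> range \<phi>" unfolding M_def using fin by (intro Max_in) auto
  then obtain U where U: "\<phi> U = M" by auto
  have phimono: "\<phi> s \<le> \<phi> t" if "s \<le> t" for s t
    unfolding \<phi>_def using Gmono[OF that] by (intro sum_mono) (simp add: le_fun_def)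
  have stab: "G t = G U" if "t \<ge> U" for t
  proof
    fix j
    show "G t j = G U j"
    proof (cases "j \<in> {1..n}")
      case True
      have "\<phi> t \<le> M" unfolding M_def using fin by (intro Max_ge) auto
      then have eq: "\<phi> U = \<phi> t" using phimono[OF that] U by simp
      have "G U j = G t j"
        using sum_mono_inv[OF eq[unfolded \<phi>_def], of j] Gmono[OF that] True
        by (simp add: le_fun_def)
      then show ?thesis by simp
    next
      case False then show ?thesis using GL[of t] GL[of U] unfolding Lat_def by simp
    qed
  qed
  define Gs where "Gs = G U"
  have GsL: "Gs \<in> Lat m n" unfolding Gs_def using GL .
  have fix_i: "f i Gs = Gs" if i: "i \<in> {1..n}" for i
  proof -
    obtain t' where t': "U + T \<le> t'" "i \<in> S t'" using fair i unfolding strongly_fair_def by blast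
    have Veq: "V t' i = Gs"
    proof
      fix j show "V t' i j = Gs j"
      proof (cases "j \<in> {1..n}")
        case True
        show ?thesis
        proof (cases "j = i")
          case True then show ?thesis using Vi[OF t'(2)] stab[of t'] t' Gs_def by simp
        next
          case False
          then obtain s where s: "max 0 (int t' - int T) \<le> int s" "V t' i j = G s j"
            using Vj[OF t'(2) \<open>j \<in> {1..n}\<close> False] by blast
          have "s \<ge> U" using s(1) t'(1) by linarith
          then show ?thesis using s stab[OF \<open>s \<ge> U\<close>] Gs_def by simp
        qed
      next
        case False then show ?thesis using VL[OF t'(2)] GsL unfolding Lat_def by simp
      qed
    qed
    have fL: "f i Gs \<in> Lat m n" using f_into i GsL unfolding maps_into_def by blast
    show ?thesis
    proof
      fix j show "f i Gs j = Gs j"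
      proof (cases "j \<in> {1..n}")
        case True
        show ?thesis
        proof (cases "j = i")
          case True
          have "G (Suc t') i = f i (V t' i) i" using step t'(2) by simp
          then show ?thesis using True Veq stab[of "Suc t'"] stab[of t'] t'(1) Gs_def by simp
        next
          case False then show ?thesis using f_local i GsL \<open>j \<in> {1..n}\<close> unfolding local_L_def by blast
        qed
      next
        case False then show ?thesis using fL GsL unfolding Lat_def by simp
      qed
    qed
  qed
  have "least_common_fp m n f Gs"
    unfolding least_common_fp_def using GsL fix_i Gbound Gs_def by blast
  then show ?thesis using stab Gs_def by blast
qed

end
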